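(* If $(\Omega,\mathcal F,\mathcal P)$ is pre-Hahn-localizable with a localization whose supports are pairwise disjoint, then $(\Omega,\mathcal F,\mathcal P)$ has the Hahn property.
   Context: $\mathcal P$ is a family of probability measures on $\mathcal F$. $\mathcal A\lll\mathcal B$ means every $A\in\mathcal A$ is absolutely continuous w.r.t. some $B\in\mathcal B$; $\mathrm{sconv}$ denotes countable convex combinations. $\mathcal P$ is pre-Hahn-localizable with localization $\mathcal Q$ (probability measures on $\mathcal F$) and supports $S_Q\in\mathcal F$ if $Q(S_R)=\delta_{QR}$ for $Q,R\in\mathcal Q$ and $\mathcal Q\lll\mathcal P\lll\mathrm{sconv}(\mathcal Q)$. For a family $\mathcal R$, $\mathcal F^{\mathcal R}=\bigcap_{R\in\mathcal R}\{F\cup Z:F\in\mathcal F,Z\subseteq N\in\mathcal F,R(N)=0\}$. $\mathcal P$ has the Hahn property if there is a family $\mathcal R$ of probability measures on $\mathcal F^{\mathcal P}$ such that (1) $\mathcal P$ and $\{R|_{\mathcal F}:R\in\mathcal R\}$ have the same polar (null-contained) sets and the $\mathcal F^{\mathcal P}$-measurable and $\mathcal F^{\mathcal R}$-measurable real functions coincide; (2) for every $R\in\mathcal R$ there is $W_R\in\mathcal F^{\mathcal P}$ with $R(W_R)=1$, the sets $W_R$ being pairwise disjoint; (3) for all $F\in\mathcal F$ and $P\in\mathcal P$, if $P(F\cap W_R)=0$ for all $R\in\mathcal R$ then $P(F)=0$. *)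

theory Defs
  imports "HOL-Probability.Probability"
begin

definition prob_on :: "'a set \<Rightarrow> 'a set set \<Rightarrow> 'a measure \<Rightarrow> bool" where
  "prob_on \<Omega> G M \<longleftrightarrow> prob_space M \<and> space M = \<Omega> \<and> sets M = G"

text \<open>A \<lll> B: every member of A is absolutely continuous w.r.t. some member of B
  (library: absolutely_continuous M N means N is abs. continuous w.r.t. M).\<close>
definition dominated_by :: "'a measure set \<Rightarrow> 'a measure set \<Rightarrow> bool" where
  "dominated_by \<A> \<B> \<longleftrightarrow> (\<forall>A\<in>\<A>. \<exists>B\<in>\<B>. absolutely_continuous B A)"

definition sconv :: "'a set \<Rightarrow> 'a set set \<Rightarrow> 'a measure set \<Rightarrow> 'a measure set" where
  "sconv \<Omega> F \<Q> = {M. space M = \<Omega> \<and> sets M = F \<and>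
      (\<exists>a Qs. (\<forall>n. a n \<ge> (0::real)) \<and> a sums 1 \<and> (\<forall>n. Qs n \<in> \<Q>) \<and>
         (\<forall>A\<in>F. emeasure M A = (\<Sum>n. ennreal (a n) * emeasure (Qs n) A)))}"

definition pre_hahn_localization ::
  "'a set \<Rightarrow> 'a set set \<Rightarrow> 'a measure set \<Rightarrow> 'a measure set \<Rightarrow> ('a measure \<Rightarrow> 'a set) \<Rightarrow> bool" where
  "pre_hahn_localization \<Omega> F \<P> \<Q> S \<longleftrightarrow>
     (\<forall>Q\<in>\<Q>. prob_on \<Omega> F Q) \<and>
     (\<forall>Q\<in>\<Q>. S Q \<in> F) \<and>
     (\<forall>Q\<in>\<Q>. \<forall>R\<in>\<Q>. emeasure Q (S R) = (if Q = R then 1 else 0)) \<and>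
     dominated_by \<Q> \<P> \<and> dominated_by \<P> (sconv \<Omega> F \<Q>)"

text \<open>F^R: intersection over R in the family of the R-completions
  {F \<union> Z : F measurable, Z \<subseteq> N, N measurable and R-null}, taken inside Pow Omega
  (so the empty family gives Pow Omega).\<close>
definition compl_sets :: "'a set \<Rightarrow> 'a measure set \<Rightarrow> 'a set set" where
  "compl_sets \<Omega> \<R> = Pow \<Omega> \<inter> (\<Inter>R\<in>\<R>.
      {A \<union> Z | A Z N. A \<in> sets R \<and> N \<in> sets R \<and> emeasure R N = 0 \<and> Z \<subseteq> N})"

definition polar :: "'a set set \<Rightarrow> 'a measure set \<Rightarrow> 'a set \<Rightarrow> bool" where
  "polar F \<M> Z \<longleftrightarrow> (\<exists>N\<in>F. Z \<subseteq> N \<and> (\<forall>M\<in>\<M>. emeasure M N = 0))"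

definition measurable_wrt :: "'a set \<Rightarrow> 'a set set \<Rightarrow> ('a \<Rightarrow> real) \<Rightarrow> bool" where
  "measurable_wrt \<Omega> G f \<longleftrightarrow> (\<forall>B\<in>sets borel. f -` B \<inter> \<Omega> \<in> G)"

definition restrict_to :: "'a set set \<Rightarrow> 'a measure \<Rightarrow> 'a measure" where
  "restrict_to F R = measure_of (space R) F (emeasure R)"

definition hahn_property :: "'a set \<Rightarrow> 'a set set \<Rightarrow> 'a measure set \<Rightarrow> bool" where
  "hahn_property \<Omega> F \<P> \<longleftrightarrow>
    (\<exists>\<R> W.
       (\<forall>R\<in>\<R>. prob_on \<Omega> (compl_sets \<Omega> \<P>) R) \<and>
       (\<forall>Z. polar F \<P> Z \<longleftrightarrow> polar F (restrict_to F ` \<R>) Z) \<and>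
       (\<forall>f. measurable_wrt \<Omega> (compl_sets \<Omega> \<P>) f \<longleftrightarrow> measurable_wrt \<Omega> (compl_sets \<Omega> \<R>) f) \<and>
       (\<forall>R\<in>\<R>. W R \<in> compl_sets \<Omega> \<P> \<and> emeasure R (W R) = 1) \<and>
       (\<forall>R\<in>\<R>. \<forall>R'\<in>\<R>. R \<noteq> R' \<longrightarrow> W R \<inter> W R' = {}) \<and>
       (\<forall>A\<in>F. \<forall>P\<in>\<P>. (\<forall>R\<in>\<R>. emeasure (completion P) (A \<inter> W R) = 0) \<longrightarrow> emeasure P A = 0))"

end

theory Submission
  imports Defs
begin

lemma compl_sets_eq:
  "compl_sets \<Omega> \<P> = Pow \<Omega> \<inter> (\<Inter>P\<in>\<P>. sets (completion P))"
  unfolding compl_sets_def sets_completion null_sets_def by blast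

lemma sigma_compl:
  assumes "\<forall>P\<in>\<P>. space P = \<Omega>"
  shows "sigma_algebra \<Omega> (Pow \<Omega> \<inter> (\<Inter>P\<in>\<P>. sets (completion P)))"
  unfolding sigma_algebra_iff2
proof (intro conjI allI impI ballI)
  fix s assume s: "s \<in> Pow \<Omega> \<inter> (\<Inter>P\<in>\<P>. sets (completion P))"
  have "\<Omega> - s \<in> sets (completion P)" if "P \<in> \<P>" for P
  proof -
    have "s \<in> sets (completion P)" using s that by blast
    then have "space (completion P) - s \<in> sets (completion P)" by (rule sets.compl_sets)
    then show ?thesis using assms that by simp
  qed
  then show "\<Omega> - s \<in> Pow \<Omega> \<inter> (\<Inter>P\<in>\<P>. sets (completion P))" by blast
next
  fix A :: "nat \<Rightarrow> _" assume A: "range A \<subseteq> Pow \<Omega> \<inter> (\<Inter>P\<in>\<P>. sets (completion P))"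
  have "(\<Union>i. A i) \<in> sets (completion P)" if "P \<in> \<P>" for P
  proof -
    have "A ` UNIV \<subseteq> sets (completion P)" using A that by blast
    then show ?thesis by (rule sets.countable_UN)
  qed
  moreover have "(\<Union>i. A i) \<in> Pow \<Omega>" using A by blast
  ultimately show "(\<Union>i. A i) \<in> Pow \<Omega> \<inter> (\<Inter>P\<in>\<P>. sets (completion P))" by blast
qed auto

lemma sconv_P:
  assumes "P \<in> \<P>" "dominated_by \<P> (sconv \<Omega> F \<Q>)"
  obtains Qs :: "nat \<Rightarrow> _" where "\<forall>n. Qs n \<in> \<Q>" "\<forall>A\<in>F. (\<forall>n. emeasure (Qs n) A = 0) \<longrightarrow> A \<in> null_sets P"
proof -
  obtain M where M: "M \<in> sconv \<Omega> F \<Q>" "absolutely_continuous M P"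
    using assms unfolding dominated_by_def by blast
  from M(1) have "sets M = F" and "\<exists>a Qs. (\<forall>n. Qs n \<in> \<Q>) \<and>
      (\<forall>A\<in>F. emeasure M A = (\<Sum>n. ennreal (a n) * emeasure (Qs n) A))"
    unfolding sconv_def by auto
  then obtain a Qs where Qs: "\<forall>n. Qs n \<in> \<Q>"
      and em: "\<forall>A\<in>F. emeasure M A = (\<Sum>n. ennreal (a n) * emeasure (Qs n) A)"
    by blast
  have "\<forall>A\<in>F. (\<forall>n. emeasure (Qs n) A = 0) \<longrightarrow> A \<in> null_sets P"
  proof (intro ballI impI)
    fix A assume "A \<in> F" "\<forall>n. emeasure (Qs n) A = 0"
    then have "A \<in> null_sets M" using em \<open>sets M = F\<close> by (simp add: null_sets_def)
    then show "A \<in> null_sets P" using M(2) unfolding absolutely_continuous_def by blast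
  qed
  note th = that[OF Qs this]
  show ?thesis by (rule th)
qed

lemma prob_compl0:
  assumes "prob_space M" "S \<in> sets M" "emeasure M S = 1"
  shows "emeasure M (space M - S) = 0"
proof -
  interpret prob_space M by fact
  show ?thesis using assms(2,3) by (simp add: emeasure_compl emeasure_space_1)
qed

theorem lemma3p13:
  fixes \<Omega> :: "'a set" and F :: "'a set set" and \<P> :: "'a measure set"
  assumes "sigma_algebra \<Omega> F"
    and "\<forall>P\<in>\<P>. prob_on \<Omega> F P"
    and "\<exists>\<Q> S. pre_hahn_localization \<Omega> F \<P> \<Q> S \<and>
           (\<forall>Q\<in>\<Q>. \<forall>R\<in>\<Q>. Q \<noteq> R \<longrightarrow> S Q \<inter> S R = {})"
  shows "hahn_property \<Omega> F \<P>"
proof -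
  note sa = assms(1)
  interpret Fs: sigma_algebra \<Omega> F by (rule sa)
  obtain \<Q> S where loc: "pre_hahn_localization \<Omega> F \<P> \<Q> S"
    and disj: "\<forall>Q\<in>\<Q>. \<forall>R\<in>\<Q>. Q \<noteq> R \<longrightarrow> S Q \<inter> S R = {}"
    using assms(3) by blast
  have hQ: "\<forall>Q\<in>\<Q>. prob_on \<Omega> F Q" and hS: "\<forall>Q\<in>\<Q>. S Q \<in> F"
    and hd: "\<forall>Q\<in>\<Q>. \<forall>R\<in>\<Q>. emeasure Q (S R) = (if Q = R then 1 else 0)"
    and dQ: "dominated_by \<Q> \<P>" and dP: "dominated_by \<P> (sconv \<Omega> F \<Q>)"
    using loc unfolding pre_hahn_localization_def by auto
  have setsP: "sets P = F" and spaceP: "space P = \<Omega>" and probP: "prob_space P" if "P \<in> \<P>" for P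
    using assms(2) that unfolding prob_on_def by auto
  have setsQ: "sets Q = F" and spaceQ: "space Q = \<Omega>" and probQ: "prob_space Q" if "Q \<in> \<Q>" for Q
    using hQ that unfolding prob_on_def by auto
  have SQ1: "emeasure Q (S Q) = 1" if "Q \<in> \<Q>" for Q using hd that by simp
  have SQ0: "emeasure Q (S R) = 0" if "Q \<in> \<Q>" "R \<in> \<Q>" "Q \<noteq> R" for Q R using hd that by simp
  have domQ: "\<exists>P\<in>\<P>. null_sets P \<subseteq> null_sets Q" if "Q \<in> \<Q>" for Q
  proof -
    have "\<exists>P\<in>\<P>. absolutely_continuous P Q" using dQ that unfolding dominated_by_def by (rule bspec)
    then show ?thesis unfolding absolutely_continuous_def .
  qed
  define C where "C = compl_sets \<Omega> \<P>"
  have C_eq: "C = Pow \<Omega> \<inter> (\<Inter>P\<in>\<P>. sets (completion P))"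
    unfolding C_def by (rule compl_sets_eq)
  have sigC: "sigma_algebra \<Omega> C"
    unfolding C_eq using spaceP by (intro sigma_compl) blast
  have FPow: "F \<subseteq> Pow \<Omega>" using sa by (simp add: sigma_algebra_iff2)
  have FcP: "x \<in> sets (completion P)" if "x \<in> F" "P \<in> \<P>" for x P
  proof -
    have "x \<in> sets P" using that setsP by simp
    then show ?thesis by (rule sets_completionI_sets)
  qed
  have CcP: "x \<in> sets (completion P)" if "x \<in> C" "P \<in> \<P>" for x P
    using that unfolding C_eq by blast
  have FC: "F \<subseteq> C"
  proof
    fix x assume "x \<in> F"
    then show "x \<in> C" unfolding C_eq using FPow FcP by blast
  qed
  have CQ: "C \<subseteq> sets (completion Q)" if QQ: "Q \<in> \<Q>" for Q
  proof
    fix X assume X: "X \<in> C"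
    obtain P where P: "P \<in> \<P>" "null_sets P \<subseteq> null_sets Q"
      using domQ QQ by blast
    then have "X \<in> sets (completion P)" using X CcP by blast
    then obtain S0 N N' where X': "X = S0 \<union> N" "N \<subseteq> N'" "N' \<in> null_sets P" "S0 \<in> sets P"
      by (rule sets_completionE)
    have "S0 \<in> sets Q" using X'(4) setsP[OF P(1)] setsQ[OF QQ] by simp
    moreover have "N' \<in> null_sets Q" using X'(3) P(2) by blast
    ultimately show "X \<in> sets (completion Q)"
      using X'(1,2) by (intro sets_completionI[of X S0 N N'])
  qed
  define Rf where "Rf Q = measure_of \<Omega> C (emeasure (completion Q))" for Q
  have emR: "emeasure (Rf Q) X = emeasure (completion Q) X" if "Q \<in> \<Q>" "X \<in> C" for Q X
    unfolding Rf_def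
  proof (rule emeasure_measure_of_sigma[OF sigC _ _ that(2)])
    show "positive C (emeasure (completion Q))" by (simp add: positive_def)
    show "countably_additive C (emeasure (completion Q))"
      unfolding countably_additive_def
    proof (intro allI impI)
      fix A :: "nat \<Rightarrow> _" assume "range A \<subseteq> C" "disjoint_family A"
      then show "(\<Sum>i. emeasure (completion Q) (A i)) = emeasure (completion Q) (\<Union>i. A i)"
        using CQ[OF that(1)] by (intro suminf_emeasure) blast+
    qed
  qed
  have setsR: "sets (Rf Q) = C" for Q
    unfolding Rf_def by (rule sigma_algebra.sets_measure_of_eq[OF sigC])
  have spR: "space (Rf Q) = \<Omega>" for Q
    unfolding Rf_def by (rule space_measure_of_conv)
  have emRF: "emeasure (Rf Q) X = emeasure Q X" if "Q \<in> \<Q>" "X \<in> F" for Q X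
  proof -
    have "X \<in> sets Q" using that setsQ by simp
    then show ?thesis using emR[OF that(1)] FC that(2) by auto
  qed
  have restr: "restrict_to F (Rf Q) = Q" if "Q \<in> \<Q>" for Q
  proof -
    have "restrict_to F (Rf Q) = measure_of \<Omega> F (emeasure Q)"
      unfolding restrict_to_def spR
    proof (rule measure_of_eq[OF FPow])
      fix a assume "a \<in> sigma_sets \<Omega> F"
      then have a: "a \<in> F" using Fs.sigma_sets_eq by simp
      then show "emeasure (Rf Q) a = emeasure Q a"
        using emRF[OF that] by simp
    qed
    also have "\<dots> = Q" using measure_of_of_measure[of Q] spaceQ[OF that] setsQ[OF that] by simp
    finally show ?thesis .
  qed
  have probR: "prob_on \<Omega> C (Rf Q)" if "Q \<in> \<Q>" for Q
  proof -
    have "\<Omega> \<in> F" using Fs.top .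
    then have "emeasure (Rf Q) \<Omega> = emeasure Q \<Omega>" using emRF[OF that] by simp
    also have "\<dots> = 1" using spaceQ[OF that] probQ[OF that] prob_space.emeasure_space_1 by metis
    finally have "emeasure (Rf Q) (space (Rf Q)) = 1" using spR by simp
    then have "prob_space (Rf Q)" by (rule prob_spaceI)
    then show ?thesis unfolding prob_on_def using setsR spR by simp
  qed
  have keyP: "\<exists>Qs::nat \<Rightarrow> _. (\<forall>n. Qs n \<in> \<Q>) \<and> (\<Union>n. S (Qs n)) \<in> F \<and>
      \<Omega> - (\<Union>n. S (Qs n)) \<in> null_sets P \<and>
      (\<forall>n N. N \<in> F \<longrightarrow> emeasure (Qs n) N = 0 \<longrightarrow> N \<inter> S (Qs n) \<in> null_sets P)"
    if P: "P \<in> \<P>" for P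
  proof -
    obtain Qs :: "nat \<Rightarrow> _" where Qs: "\<forall>n. Qs n \<in> \<Q>"
      and nul: "\<forall>A\<in>F. (\<forall>n. emeasure (Qs n) A = 0) \<longrightarrow> A \<in> null_sets P"
      using sconv_P[OF P dP] by blast
    define U where "U = (\<Union>n. S (Qs n))"
    have SF: "S (Qs n) \<in> F" for n using hS Qs by blast
    have UF: "U \<in> F" unfolding U_def using SF sigma_algebra.countable_UN[OF sa, of "\<lambda>n. S (Qs n)" UNIV] by blast
    have OUF: "\<Omega> - U \<in> F" using UF Fs.compl_sets by blast
    have z: "emeasure (Qs n) (\<Omega> - U) = 0" for n
    proof -
      have sn: "sets (Qs n) = F" and pn: "prob_space (Qs n)" and spn: "space (Qs n) = \<Omega>"
        using Qs setsQ probQ spaceQ by blast+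
      have "emeasure (Qs n) (space (Qs n) - S (Qs n)) = 0"
        using prob_compl0[OF pn] SF sn SQ1 Qs by simp
      then have e0: "emeasure (Qs n) (\<Omega> - S (Qs n)) = 0" by (simp add: spn)
      have s0: "\<Omega> - S (Qs n) \<in> sets (Qs n)"
        using SF Fs.compl_sets sn by simp
      have "\<Omega> - U \<subseteq> \<Omega> - S (Qs n)" unfolding U_def by blast
      then show ?thesis by (rule emeasure_eq_0[OF s0 e0])
    qed
    have n1: "\<Omega> - U \<in> null_sets P"
      by (rule nul[rule_format, OF OUF]) (rule z)
    have n2: "N \<inter> S (Qs n) \<in> null_sets P" if N: "N \<in> F" and N0: "emeasure (Qs n) N = 0" for n N
    proof -
      have NSF: "N \<inter> S (Qs n) \<in> F" using N SF Fs.Int by blast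
      have "emeasure (Qs k) (N \<inter> S (Qs n)) = 0" for k
      proof -
        have sk: "sets (Qs k) = F" using Qs setsQ by blast
        show ?thesis
        proof (cases "Qs k = Qs n")
          case True
          have "N \<in> sets (Qs k)" by (simp add: sk N)
          moreover have "emeasure (Qs k) N = 0" using N0 True by simp
          ultimately show ?thesis by (rule emeasure_eq_0) blast
        next
          case False
          have "S (Qs n) \<in> sets (Qs k)" by (simp add: sk SF)
          moreover have "emeasure (Qs k) (S (Qs n)) = 0" using SQ0 Qs False by blast
          ultimately show ?thesis by (rule emeasure_eq_0) blast
        qed
      qed
      then show ?thesis by (rule nul[rule_format, OF NSF])
    qed
    show ?thesis
      apply (rule exI[of _ Qs])
      using Qs UF n1 n2 unfolding U_def by blast
  qed
  define \<R> where "\<R> = Rf ` \<Q>"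
  define W where "W R = S (restrict_to F R)" for R
  have imgQ: "restrict_to F ` \<R> = \<Q>"
    unfolding \<R>_def image_image using restr by simp
  show ?thesis
    unfolding hahn_property_def
  proof (intro exI[of _ \<R>] exI[of _ W] conjI)
    show "\<forall>R\<in>\<R>. prob_on \<Omega> (compl_sets \<Omega> \<P>) R"
      using probR unfolding \<R>_def C_def by blast
    have nullPQ: "(\<forall>P\<in>\<P>. emeasure P N = 0) \<longleftrightarrow> (\<forall>Q\<in>\<Q>. emeasure Q N = 0)" if N: "N \<in> F" for N
    proof
      assume H: "\<forall>P\<in>\<P>. emeasure P N = 0"
      show "\<forall>Q\<in>\<Q>. emeasure Q N = 0"
      proof
        fix Q assume Q: "Q \<in> \<Q>"
        obtain P where P: "P \<in> \<P>" "null_sets P \<subseteq> null_sets Q"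
          using domQ Q by blast
        have "N \<in> null_sets P" using H P(1) N setsP[OF P(1)] by (simp add: null_sets_def)
        then show "emeasure Q N = 0" using P(2) by blast
      qed
    next
      assume H: "\<forall>Q\<in>\<Q>. emeasure Q N = 0"
      show "\<forall>P\<in>\<P>. emeasure P N = 0"
      proof
        fix P assume P: "P \<in> \<P>"
        obtain Qs :: "nat \<Rightarrow> _" where Qs: "\<forall>n. Qs n \<in> \<Q>"
          and nul: "\<forall>A\<in>F. (\<forall>n. emeasure (Qs n) A = 0) \<longrightarrow> A \<in> null_sets P"
          using sconv_P[OF P dP] by blast
        have "N \<in> null_sets P" using nul N H Qs by blast
        then show "emeasure P N = 0" by blast
      qed
    qed
    show "\<forall>Z. polar F \<P> Z = polar F (restrict_to F ` \<R>) Z"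
      unfolding imgQ polar_def using nullPQ by blast
    have CR: "compl_sets \<Omega> \<R> = C"
    proof
      show "C \<subseteq> compl_sets \<Omega> \<R>"
      proof
        fix X assume X: "X \<in> C"
        have "X \<in> sets (completion R)" if "R \<in> \<R>" for R
        proof -
          have "X \<in> sets R" using that X setsR unfolding \<R>_def by blast
          then show ?thesis by (rule sets_completionI_sets)
        qed
        moreover have "X \<in> Pow \<Omega>" using X sigC[unfolded sigma_algebra_iff2] by blast
        ultimately show "X \<in> compl_sets \<Omega> \<R>" unfolding compl_sets_eq by blast
      qed
    next
      show "compl_sets \<Omega> \<R> \<subseteq> C"
      proof
        fix X assume X: "X \<in> compl_sets \<Omega> \<R>"
        then have XO: "X \<subseteq> \<Omega>" and XR: "\<And>Q. Q \<in> \<Q> \<Longrightarrow> X \<in> sets (completion (Rf Q))"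
          unfolding compl_sets_eq \<R>_def by blast+
        have "X \<in> sets (completion P)" if P: "P \<in> \<P>" for P
        proof -
          obtain Qs :: "nat \<Rightarrow> _" where Qs: "\<forall>n. Qs n \<in> \<Q>" and UF: "(\<Union>n. S (Qs n)) \<in> F"
            and n1: "\<Omega> - (\<Union>n. S (Qs n)) \<in> null_sets P"
            and n2: "\<forall>n N. N \<in> F \<longrightarrow> emeasure (Qs n) N = 0 \<longrightarrow> N \<inter> S (Qs n) \<in> null_sets P"
            using keyP[OF P] by blast
          have part: "X \<inter> S (Qs n) \<in> sets (completion P)" for n
          proof -
            have Qn: "Qs n \<in> \<Q>" using Qs by blast
            obtain A Z N' where A: "X = A \<union> Z" "Z \<subseteq> N'" "N' \<in> null_sets (Rf (Qs n))" "A \<in> sets (Rf (Qs n))"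
              using XR[OF Qn] by (rule sets_completionE)
            have AC: "A \<in> C" using A(4) setsR by simp
            have N'C: "N' \<in> C" using A(3) setsR by blast
            have "emeasure (completion (Qs n)) N' = 0" using null_setsD1[OF A(3)] emR[OF Qn N'C] by simp
            then have "N' \<in> null_sets (completion (Qs n))"
              by (rule null_setsI) (rule subsetD[OF CQ[OF Qn] N'C])
            then obtain N'' where N'': "N'' \<in> null_sets (Qs n)" "N' \<subseteq> N''"
              unfolding null_sets_completion_iff2 by blast
            have N''F: "N'' \<in> F" using null_setsD2[OF N''(1)] setsQ[OF Qn] by simp
            have NS: "N'' \<inter> S (Qs n) \<in> null_sets P"
              by (rule n2[rule_format, OF N''F null_setsD1[OF N''(1)]])
            have "Z \<inter> S (Qs n) \<subseteq> N'' \<inter> S (Qs n)" using A(2) N''(2) by blast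
            then have Znull: "Z \<inter> S (Qs n) \<in> null_sets (completion P)"
              unfolding null_sets_completion_iff2 using NS by blast
            have SF: "S (Qs n) \<in> F" using hS Qn by blast
            have As: "A \<inter> S (Qs n) \<in> sets (completion P)"
              by (rule sets.Int[OF CcP[OF AC P] FcP[OF SF P]])
            have Zs: "Z \<inter> S (Qs n) \<in> sets (completion P)" using Znull by (rule null_setsD2)
            have eqX: "X \<inter> S (Qs n) = (A \<inter> S (Qs n)) \<union> (Z \<inter> S (Qs n))" using A(1) by blast
            show ?thesis unfolding eqX by (rule sets.Un[OF As Zs])
          qed
          have rest: "X - (\<Union>n. S (Qs n)) \<in> sets (completion P)"
          proof -
            have "X - (\<Union>n. S (Qs n)) \<subseteq> \<Omega> - (\<Union>n. S (Qs n))" using XO by blast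
            then have "X - (\<Union>n. S (Qs n)) \<in> null_sets (completion P)"
              using n1 null_sets_completion_iff2 by blast
            then show ?thesis by blast
          qed
          have "(\<Union>n. X \<inter> S (Qs n)) \<in> sets (completion P)"
            using part by blast
          moreover have "X = (\<Union>n. X \<inter> S (Qs n)) \<union> (X - (\<Union>n. S (Qs n)))" by blast
          ultimately show ?thesis using rest by (metis sets.Un)
        qed
        then show "X \<in> C" unfolding C_eq using XO by blast
      qed
    qed
    show "\<forall>f. measurable_wrt \<Omega> (compl_sets \<Omega> \<P>) f = measurable_wrt \<Omega> (compl_sets \<Omega> \<R>) f"
      unfolding CR C_def by blast
    show "\<forall>R\<in>\<R>. W R \<in> compl_sets \<Omega> \<P> \<and> emeasure R (W R) = 1"
    proof
      fix R assume "R \<in> \<R>"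
      then obtain Q where Q: "Q \<in> \<Q>" "R = Rf Q" unfolding \<R>_def by blast
      have WQ: "W R = S Q" unfolding W_def Q(2) restr[OF Q(1)] ..
      have SF: "S Q \<in> F" using hS Q by blast
      have "emeasure R (W R) = 1" using WQ Q(2) emRF[OF Q(1) SF] SQ1[OF Q(1)] by simp
      moreover have "W R \<in> compl_sets \<Omega> \<P>" unfolding WQ C_def[symmetric] using SF FC by blast
      ultimately show "W R \<in> compl_sets \<Omega> \<P> \<and> emeasure R (W R) = 1" by blast
    qed
    show "\<forall>R\<in>\<R>. \<forall>R'\<in>\<R>. R \<noteq> R' \<longrightarrow> W R \<inter> W R' = {}"
    proof (intro ballI impI)
      fix R R' assume "R \<in> \<R>" "R' \<in> \<R>" "R \<noteq> R'"
      then obtain Q Q' where "Q \<in> \<Q>" "Q' \<in> \<Q>" "R = Rf Q" "R' = Rf Q'" "Q \<noteq> Q'"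
        unfolding \<R>_def by blast
      then show "W R \<inter> W R' = {}" unfolding W_def using restr disj by simp
    qed
    show "\<forall>A\<in>F. \<forall>P\<in>\<P>. (\<forall>R\<in>\<R>. emeasure (completion P) (A \<inter> W R) = 0) \<longrightarrow> emeasure P A = 0"
    proof (intro ballI impI)
      fix A P assume AF: "A \<in> F" and P: "P \<in> \<P>" and H: "\<forall>R\<in>\<R>. emeasure (completion P) (A \<inter> W R) = 0"
      obtain Qs :: "nat \<Rightarrow> _" where Qs: "\<forall>n. Qs n \<in> \<Q>" and UF: "(\<Union>n. S (Qs n)) \<in> F"
        and n1: "\<Omega> - (\<Union>n. S (Qs n)) \<in> null_sets P"
        using keyP[OF P] by blast
      have part: "A \<inter> S (Qs n) \<in> null_sets P" for n
      proof -
        have Qn: "Qs n \<in> \<Q>" using Qs by blast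
        have WQ: "W (Rf (Qs n)) = S (Qs n)" unfolding W_def restr[OF Qn] ..
        have "Rf (Qs n) \<in> \<R>" unfolding \<R>_def using Qn by blast
        then have "emeasure (completion P) (A \<inter> S (Qs n)) = 0" using H WQ by metis
        moreover have "A \<inter> S (Qs n) \<in> sets P"
          using AF hS Qn Fs.Int setsP[OF P] by blast
        ultimately show ?thesis by (simp add: null_sets_def)
      qed
      have "A \<inter> (\<Union>n. S (Qs n)) = (\<Union>n. A \<inter> S (Qs n))" by blast
      then have a1: "A \<inter> (\<Union>n. S (Qs n)) \<in> null_sets P" using part by (metis null_sets_UN)
      have AsP: "A - (\<Union>n. S (Qs n)) \<in> sets P"
        using AF UF Fs.Diff setsP[OF P] by blast
      have "A - (\<Union>n. S (Qs n)) \<subseteq> \<Omega> - (\<Union>n. S (Qs n))" using AF FPow by blast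
      then have a2: "A - (\<Union>n. S (Qs n)) \<in> null_sets P"
        using n1 AsP emeasure_eq_0[of "\<Omega> - (\<Union>n. S (Qs n))" P] by blast
      have "A = (A \<inter> (\<Union>n. S (Qs n))) \<union> (A - (\<Union>n. S (Qs n)))" by blast
      then have "A \<in> null_sets P" using a1 a2 by (metis null_sets.Un)
      then show "emeasure P A = 0" by blast
    qed
  qed
qed

end
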